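(* For any Rauzy class there exists an admissible word $\mathbf q$ (a finite path in the Rauzy graph) which is simple, whose matrix $A(\mathbf q)$ has strictly positive entries, and such that the associated substitution $\zeta=\zeta_{\mathbf q}$ (with $Q=\mathsf S_\zeta=A(\mathbf q)^t$) admits good return words $u_1,\dots,u_m$ whose population vectors $\vec\ell(u_1),\dots,\vec\ell(u_m)$ generate $\mathbb Z^m$ as a free abelian group.
   Context: Interval exchange transformations (IETs) of $m$ intervals with combinatorics in a fixed Rauzy class; the Rauzy graph is the directed graph whose vertices are the permutations in the class and whose edges correspond to the two Rauzy induction operations, labeled "a" and "b". A finite path $V$ in the Rauzy graph (an admissible word) determines a pair of intervals $J\subset I$ with IETs $T_I$ (subintervals $I_1,\dots,I_m$) and $T_J$ (subintervals $J_1,\dots,J_m$), $T_J$ the first return map of $T_I$ to $J$; with $r_i=\min\{k>0:T_I^kJ_i\subset J\}$ and $n(i,k)$ defined by $T_I^kJ_i\subset I_{n(i,k)}$, the associated substitution on $\{1,\dots,m\}$ is $\zeta_V(i)=n(i,0)n(i,1)\cdots n(i,r_i-1)$; concatenation satisfies $\zeta_{V_1V_2}=\zeta_{V_2}\zeta_{V_1}$, and $A(V)=\mathsf S_{\zeta_V}^t$ with $\mathsf S_\zeta(i,j)=\#\{i\text{ in }\zeta(j)\}$. A word $q_1\dots q_k$ (here in the edges of the path) is simple if $q_i\dots q_k\ne q_1\dots q_{k-i+1}$ for $2\le i\le k$. A word $v$ is a good return word for $\zeta$ if it starts with some letter $c$ and $vc$ occurs in $\zeta(j)$ for every letter $j$;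 $\vec\ell(v)$ is the population vector of $v$. *)

theory Defs
  imports Main
begin

text \<open>Combinatorial setting (Veech's convention).  A permutation \<pi> of {1..m} is a function nat => nat that is a bijection
  of {1..m} and the identity outside {1..m}; the IET with combinatorics \<pi> sends
  the i-th subinterval I_i to the \<pi>(i)-th position.\<close>

definition is_perm :: "nat \<Rightarrow> (nat \<Rightarrow> nat) \<Rightarrow> bool" where
  "is_perm m \<pi> \<longleftrightarrow> bij_betw \<pi> {1..m} {1..m} \<and> (\<forall>j. j \<notin> {1..m} \<longrightarrow> \<pi> j = j)"

definition irreducible :: "nat \<Rightarrow> (nat \<Rightarrow> nat) \<Rightarrow> bool" where
  "irreducible m \<pi> \<longleftrightarrow> (\<forall>k. 1 \<le> k \<and> k < m \<longrightarrow> \<pi> ` {1..k} \<noteq> {1..k})"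

text \<open>k = \<pi>^{-1}(m), the interval that is placed last by the IET.\<close>
definition last_pre :: "nat \<Rightarrow> (nat \<Rightarrow> nat) \<Rightarrow> nat" where
  "last_pre m \<pi> = the_inv_into {1..m} \<pi> m"

datatype rlabel = La | Lb

definition rauzy_a :: "nat \<Rightarrow> (nat \<Rightarrow> nat) \<Rightarrow> nat \<Rightarrow> nat" where
  "rauzy_a m \<pi> j = (let k = last_pre m \<pi> in
     if j < 1 \<or> m < j then j
     else if j \<le> k then \<pi> j
     else if j = k + 1 then \<pi> m
     else \<pi> (j - 1))"

definition rauzy_b :: "nat \<Rightarrow> (nat \<Rightarrow> nat) \<Rightarrow> nat \<Rightarrow> nat" where
  "rauzy_b m \<pi> j =
     (if j < 1 \<or> m < j then j
      else if \<pi> j \<le> \<pi> m then \<pi> j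
      else if \<pi> j < m then \<pi> j + 1
      else \<pi> m + 1)"

definition rauzy_step :: "nat \<Rightarrow> rlabel \<Rightarrow> (nat \<Rightarrow> nat) \<Rightarrow> (nat \<Rightarrow> nat)" where
  "rauzy_step m c \<pi> = (case c of La \<Rightarrow> rauzy_a m \<pi> | Lb \<Rightarrow> rauzy_b m \<pi>)"

text \<open>Substitution of one Rauzy step: zeta(i) = n(i,0) ... n(i,r_i - 1), the itinerary
  of the new subinterval J_i through the old subintervals I_n before returning to J.
  Step a (bottom-last interval I_k longer than I_m): I_k splits into J_k, J_{k+1};
  step b (I_m longer): I_k passes through I_m before returning.\<close>
definition step_subst :: "nat \<Rightarrow> rlabel \<Rightarrow> (nat \<Rightarrow> nat) \<Rightarrow> nat \<Rightarrow> nat list" where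
  "step_subst m c \<pi> j = (let k = last_pre m \<pi> in
     case c of
       La \<Rightarrow> (if j \<le> k then [j] else if j = k + 1 then [k, m] else [j - 1])
     | Lb \<Rightarrow> (if j = k then [k, m] else [j]))"

fun path_edges :: "nat \<Rightarrow> (nat \<Rightarrow> nat) \<Rightarrow> rlabel list \<Rightarrow> ((nat \<Rightarrow> nat) \<times> rlabel) list" where
  "path_edges m \<pi> [] = []"
| "path_edges m \<pi> (c # cs) = (\<pi>, c) # path_edges m (rauzy_step m c \<pi>) cs"

text \<open>zeta of a path: zeta_{c V} (i) = zeta_c applied (as a morphism) to zeta_V(i);
  this is the itinerary of the final subintervals through the initial ones.\<close>
fun path_subst :: "nat \<Rightarrow> (nat \<Rightarrow> nat) \<Rightarrow> rlabel list \<Rightarrow> nat \<Rightarrow> nat list" where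
  "path_subst m \<pi> [] = (\<lambda>i. [i])"
| "path_subst m \<pi> (c # cs) =
     (\<lambda>i. concat (map (step_subst m c \<pi>) (path_subst m (rauzy_step m c \<pi>) cs i)))"

definition rauzy_rel :: "nat \<Rightarrow> ((nat \<Rightarrow> nat) \<times> (nat \<Rightarrow> nat)) set" where
  "rauzy_rel m = {(\<pi>, rauzy_step m c \<pi>) | \<pi> c. True}"

definition rauzy_class :: "nat \<Rightarrow> (nat \<Rightarrow> nat) \<Rightarrow> (nat \<Rightarrow> nat) set" where
  "rauzy_class m \<pi>0 = {\<pi>. (\<pi>0, \<pi>) \<in> (rauzy_rel m)\<^sup>*}"

definition simple_word :: "'a list \<Rightarrow> bool" where
  "simple_word q \<longleftrightarrow> (\<forall>i. 1 \<le> i \<and> i < length q \<longrightarrow> drop i q \<noteq> take (length q - i) q)"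

definition subst_matrix :: "(nat \<Rightarrow> nat list) \<Rightarrow> nat \<Rightarrow> nat \<Rightarrow> nat" where
  "subst_matrix \<zeta> i j = count_list (\<zeta> j) i"

definition rauzy_matrix :: "nat \<Rightarrow> (nat \<Rightarrow> nat) \<Rightarrow> rlabel list \<Rightarrow> nat \<Rightarrow> nat \<Rightarrow> nat" where
  "rauzy_matrix m \<pi> q i j = subst_matrix (path_subst m \<pi> q) j i"

definition good_return_word :: "nat \<Rightarrow> (nat \<Rightarrow> nat list) \<Rightarrow> nat list \<Rightarrow> bool" where
  "good_return_word m \<zeta> v \<longleftrightarrow> v \<noteq> [] \<and>
     (\<forall>j\<in>{1..m}. \<exists>x y. \<zeta> j = x @ v @ [hd v] @ y)"

definition pop_vec :: "nat list \<Rightarrow> nat \<Rightarrow> int" where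
  "pop_vec v i = int (count_list v i)"

definition generates_Zm :: "nat \<Rightarrow> (nat \<Rightarrow> nat \<Rightarrow> int) \<Rightarrow> bool" where
  "generates_Zm m w \<longleftrightarrow> (\<forall>x :: nat \<Rightarrow> int. \<exists>c :: nat \<Rightarrow> int.
      \<forall>i\<in>{1..m}. x i = (\<Sum>k=1..m. c k * w k i))"

end

theory Submission
  imports Defs
begin


lemma perm_bij: "is_perm m \<pi> \<Longrightarrow> bij_betw \<pi> {1..m} {1..m}"
  by (simp add: is_perm_def)

lemma perm_inj: "is_perm m \<pi> \<Longrightarrow> inj_on \<pi> {1..m}"
  by (simp add: is_perm_def bij_betw_def)

lemma perm_range: "is_perm m \<pi> \<Longrightarrow> j \<in> {1..m} \<Longrightarrow> \<pi> j \<in> {1..m}"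
  using bij_betwE perm_bij by blast

lemma perm_range': "is_perm m \<pi> \<Longrightarrow> 1 \<le> j \<Longrightarrow> j \<le> m \<Longrightarrow> 1 \<le> \<pi> j \<and> \<pi> j \<le> m"
  using perm_range[of m \<pi> j] by auto

lemma perm_surj: "is_perm m \<pi> \<Longrightarrow> y \<in> {1..m} \<Longrightarrow> \<exists>j\<in>{1..m}. \<pi> j = y"
  using perm_bij[of m \<pi>] unfolding bij_betw_def by (metis imageE)

lemma perm_eq_iff: "is_perm m \<pi> \<Longrightarrow> i \<in> {1..m} \<Longrightarrow> j \<in> {1..m} \<Longrightarrow> (\<pi> i = \<pi> j) = (i = j)"
  using perm_inj[of m \<pi>] unfolding inj_on_def by blast

lemma last_pre_prop:
  assumes "is_perm m \<pi>" "1 \<le> m"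
  shows "last_pre m \<pi> \<in> {1..m}" "\<pi> (last_pre m \<pi>) = m"
proof -
  obtain j where j: "j \<in> {1..m}" "\<pi> j = m" using perm_surj[OF assms(1), of m] assms(2) by auto
  have "last_pre m \<pi> = j" unfolding last_pre_def
    using the_inv_into_f_eq[OF perm_inj[OF assms(1)] j(2) j(1)] .
  then show "last_pre m \<pi> \<in> {1..m}" "\<pi> (last_pre m \<pi>) = m" using j by auto
qed

lemma last_pre_eq:
  assumes "is_perm m \<pi>" "j \<in> {1..m}" "\<pi> j = m"
  shows "last_pre m \<pi> = j"
  unfolding last_pre_def using the_inv_into_f_eq[OF perm_inj[OF assms(1)] assms(3) assms(2)] .

lemma irred_last:
  assumes "is_perm m \<pi>" "irreducible m \<pi>" "2 \<le> m"
  shows "\<pi> m \<noteq> m"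
proof
  assume h: "\<pi> m = m"
  have "\<pi> ` {1..m-1} \<subseteq> {1..m-1}"
  proof
    fix y assume "y \<in> \<pi> ` {1..m-1}"
    then obtain i where i: "i \<in> {1..m-1}" "y = \<pi> i" by auto
    have "\<pi> i \<noteq> m"
    proof
      assume "\<pi> i = m"
      then have "\<pi> i = \<pi> m" using h by simp
      then have "i = m" using perm_eq_iff[OF assms(1), of i m] i assms(3) by auto
      then show False using i assms(3) by auto
    qed
    moreover have "1 \<le> \<pi> i \<and> \<pi> i \<le> m" using perm_range'[OF assms(1), of i] i by auto
    ultimately show "y \<in> {1..m-1}" using i by auto
  qed
  moreover have "card (\<pi> ` {1..m-1}) = card {1..m-1::nat}"
    by (rule card_image) (rule inj_on_subset[OF perm_inj[OF assms(1)]], auto)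
  ultimately have "\<pi> ` {1..m-1} = {1..m-1}"
    by (simp add: card_subset_eq)
  moreover have "1 \<le> m - 1 \<and> m - 1 < m" using assms(3) by auto
  ultimately show False using assms(2) unfolding irreducible_def by blast
qed

lemma last_pre_lt:
  assumes "is_perm m \<pi>" "irreducible m \<pi>" "2 \<le> m"
  shows "last_pre m \<pi> < m"
proof -
  have "last_pre m \<pi> \<in> {1..m}" "\<pi> (last_pre m \<pi>) = m" using last_pre_prop[OF assms(1)] assms(3) by auto
  moreover have "\<pi> m \<noteq> m" using irred_last[OF assms] .
  ultimately show ?thesis by (metis atLeastAtMost_iff le_neq_implies_less)
qed



definition rho_a :: "nat \<Rightarrow> nat \<Rightarrow> nat \<Rightarrow> nat" where
  "rho_a m K j = (if j \<le> K then j else if j = K + 1 then m else j - 1)"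

lemma rauzy_a_rho:
  assumes "j \<in> {1..m}"
  shows "rauzy_a m \<pi> j = \<pi> (rho_a m (last_pre m \<pi>) j)"
  using assms unfolding rauzy_a_def rho_a_def Let_def by auto

lemma rho_a_inj:
  assumes "K \<le> m"
  shows "inj_on (rho_a m K) {1..m}"
  unfolding inj_on_def rho_a_def using assms by (intro ballI impI; simp split: if_splits; linarith)

lemma rho_a_range:
  assumes "1 \<le> K" "K \<le> m" "j \<in> {1..m}"
  shows "rho_a m K j \<in> {1..m}"
  using assms unfolding rho_a_def by auto

lemma subset_card_eq_fin:
  fixes f :: "nat \<Rightarrow> nat"
  assumes "inj_on f {1..m}" "f ` {1..m} \<subseteq> {1..m}"
  shows "f ` {1..m} = {1..m}"
  using assms by (simp add: endo_inj_surj)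

lemma rauzy_a_perm:
  assumes p: "is_perm m \<pi>" and m: "1 \<le> m"
  shows "is_perm m (rauzy_a m \<pi>)"
proof -
  let ?K = "last_pre m \<pi>"
  have K: "?K \<in> {1..m}" using last_pre_prop[OF p m] by auto
  have inj: "inj_on (rauzy_a m \<pi>) {1..m}"
  proof (rule inj_onI)
    fix x y assume xy: "x \<in> {1..m}" "y \<in> {1..m}" "rauzy_a m \<pi> x = rauzy_a m \<pi> y"
    then have "\<pi> (rho_a m ?K x) = \<pi> (rho_a m ?K y)" using rauzy_a_rho[OF xy(1)] rauzy_a_rho[OF xy(2)] by simp
    moreover have "rho_a m ?K x \<in> {1..m}" "rho_a m ?K y \<in> {1..m}"
      using rho_a_range K xy by auto
    ultimately have "rho_a m ?K x = rho_a m ?K y" using perm_eq_iff[OF p] by blast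
    moreover have "?K \<le> m" using K by simp
    ultimately show "x = y" using inj_onD[OF rho_a_inj[of ?K m]] xy(1,2) by blast
  qed
  have rng: "rauzy_a m \<pi> ` {1..m} \<subseteq> {1..m}"
  proof
    fix y assume "y \<in> rauzy_a m \<pi> ` {1..m}"
    then obtain x where x: "x \<in> {1..m}" "y = rauzy_a m \<pi> x" by auto
    have "rho_a m ?K x \<in> {1..m}" using rho_a_range[OF _ _ x(1)] K by simp
    then show "y \<in> {1..m}" using rauzy_a_rho[OF x(1)] x(2) perm_range[OF p] by simp
  qed
  have "bij_betw (rauzy_a m \<pi>) {1..m} {1..m}"
    using inj subset_card_eq_fin[OF inj rng] unfolding bij_betw_def by auto
  moreover have "\<forall>j. j \<notin> {1..m} \<longrightarrow> rauzy_a m \<pi> j = j" unfolding rauzy_a_def by auto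
  ultimately show ?thesis unfolding is_perm_def by auto
qed

definition tau_b :: "nat \<Rightarrow> nat \<Rightarrow> nat \<Rightarrow> nat" where
  "tau_b m p v = (if v \<le> p then v else if v < m then v + 1 else p + 1)"

lemma rauzy_b_tau:
  assumes "j \<in> {1..m}"
  shows "rauzy_b m \<pi> j = tau_b m (\<pi> m) (\<pi> j)"
  using assms unfolding rauzy_b_def tau_b_def by auto

lemma tau_b_inj:
  assumes "p \<le> m"
  shows "inj_on (tau_b m p) {1..m}"
  unfolding inj_on_def tau_b_def using assms by (simp split: if_splits)

lemma tau_b_range:
  assumes "p \<le> m" "v \<in> {1..m}"
  shows "tau_b m p v \<in> {1..m}"
  using assms unfolding tau_b_def by auto

lemma tau_b_ge:
  assumes "p \<le> m" "v < m"
  shows "v \<le> tau_b m p v"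
  using assms unfolding tau_b_def by auto

lemma rauzy_b_perm:
  assumes p: "is_perm m \<pi>" and m: "1 \<le> m"
  shows "is_perm m (rauzy_b m \<pi>)"
proof -
  have pm: "\<pi> m \<in> {1..m}" using perm_range[OF p] m by auto
  have inj: "inj_on (rauzy_b m \<pi>) {1..m}"
  proof (rule inj_onI)
    fix x y assume xy: "x \<in> {1..m}" "y \<in> {1..m}" "rauzy_b m \<pi> x = rauzy_b m \<pi> y"
    then have "tau_b m (\<pi> m) (\<pi> x) = tau_b m (\<pi> m) (\<pi> y)" using rauzy_b_tau[OF xy(1)] rauzy_b_tau[OF xy(2)] by simp
    moreover have "\<pi> x \<in> {1..m}" "\<pi> y \<in> {1..m}" using perm_range[OF p] xy by auto
    moreover have "\<pi> m \<le> m" using pm by simp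
    ultimately have "\<pi> x = \<pi> y" using inj_onD[OF tau_b_inj[of "\<pi> m" m]] by blast
    then show "x = y" using perm_eq_iff[OF p] xy by blast
  qed
  have rng: "rauzy_b m \<pi> ` {1..m} \<subseteq> {1..m}"
  proof
    fix y assume "y \<in> rauzy_b m \<pi> ` {1..m}"
    then obtain x where x: "x \<in> {1..m}" "y = rauzy_b m \<pi> x" by auto
    have "tau_b m (\<pi> m) (\<pi> x) \<in> {1..m}" using tau_b_range pm perm_range[OF p x(1)] by simp
    then show "y \<in> {1..m}" using rauzy_b_tau[OF x(1)] x(2) by simp
  qed
  have "bij_betw (rauzy_b m \<pi>) {1..m} {1..m}"
    using inj subset_card_eq_fin[OF inj rng] unfolding bij_betw_def by auto
  moreover have "\<forall>j. j \<notin> {1..m} \<longrightarrow> rauzy_b m \<pi> j = j" unfolding rauzy_b_def by auto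
  ultimately show ?thesis unfolding is_perm_def by auto
qed

lemma perm_image_eq:
  assumes p: "is_perm m \<pi>" and t: "t \<le> m" and sub: "\<pi> ` {1..t} \<subseteq> {1..t}"
  shows "\<pi> ` {1..t} = {1..t}"
proof -
  have "inj_on \<pi> {1..t}" by (rule inj_on_subset[OF perm_inj[OF p]]) (use t in auto)
  then have "card (\<pi> ` {1..t}) = card {1..t}" by (rule card_image)
  then show ?thesis using sub by (simp add: card_subset_eq)
qed

lemma rauzy_a_irred:
  assumes p: "is_perm m \<pi>" and ir: "irreducible m \<pi>" and m: "1 \<le> m"
  shows "irreducible m (rauzy_a m \<pi>)"
  unfolding irreducible_def
proof (intro allI impI)
  fix t assume t: "1 \<le> t \<and> t < m"
  let ?K = "last_pre m \<pi>"
  have K: "?K \<in> {1..m}" "\<pi> ?K = m" using last_pre_prop[OF p m] by auto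
  show "rauzy_a m \<pi> ` {1..t} \<noteq> {1..t}"
  proof (cases "t \<le> ?K")
    case True
    have "rauzy_a m \<pi> ` {1..t} = \<pi> ` {1..t}"
      by (rule image_cong) (use True K in \<open>auto simp: rauzy_a_def Let_def\<close>)
    then show ?thesis using ir t unfolding irreducible_def by auto
  next
    case False
    have "rauzy_a m \<pi> ?K = m" using K unfolding rauzy_a_def Let_def by auto
    then have "m \<in> rauzy_a m \<pi> ` {1..t}" using False K by force
    moreover have "m \<notin> {1..t}" using t by simp
    ultimately show ?thesis by blast
  qed
qed

lemma rauzy_b_irred:
  assumes p: "is_perm m \<pi>" and ir: "irreducible m \<pi>" and m: "1 \<le> m"
  shows "irreducible m (rauzy_b m \<pi>)"
  unfolding irreducible_def
proof (intro allI impI notI)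
  fix t assume t: "1 \<le> t \<and> t < m" and eq: "rauzy_b m \<pi> ` {1..t} = {1..t}"
  have pm: "\<pi> m \<in> {1..m}" using perm_range[OF p] m by auto
  have bm: "rauzy_b m \<pi> m = \<pi> m" unfolding rauzy_b_def using m by auto
  show False
  proof (cases "\<pi> m \<le> t")
    case True
    then have "\<pi> m \<in> rauzy_b m \<pi> ` {1..t}" using eq pm by auto
    then obtain i where i: "i \<in> {1..t}" "rauzy_b m \<pi> i = rauzy_b m \<pi> m" using bm by auto
    then have "i = m" using perm_eq_iff[OF rauzy_b_perm[OF p m]] t m by auto
    then show False using i t by auto
  next
    case False
    have "\<pi> ` {1..t} \<subseteq> {1..t}"
    proof
      fix y assume "y \<in> \<pi> ` {1..t}"
      then obtain i where i: "i \<in> {1..t}" "y = \<pi> i" by auto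
      have im: "i \<in> {1..m}" using i t by auto
      have "rauzy_b m \<pi> i \<in> {1..t}" using eq i by auto
      moreover have "1 \<le> \<pi> i" using perm_range[OF p im] by auto
      moreover have "\<pi> i \<le> t"
      proof (cases "\<pi> i = m")
        case True
        have "i \<noteq> m" using i t by auto
        then have "\<pi> m \<noteq> m" using True perm_eq_iff[OF p, of i m] im m by auto
        then have "\<pi> m < m" using pm by auto
        then have "rauzy_b m \<pi> i = \<pi> m + 1" using rauzy_b_tau[OF im] True unfolding tau_b_def by auto
        then show ?thesis using False \<open>rauzy_b m \<pi> i \<in> {1..t}\<close> by auto
      next
        case False
        then have "\<pi> i < m" using perm_range[OF p im] by auto
        then have "\<pi> i \<le> rauzy_b m \<pi> i"
          using rauzy_b_tau[OF im] tau_b_ge[of "\<pi> m" m "\<pi> i"] pm by auto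
        then show ?thesis using \<open>rauzy_b m \<pi> i \<in> {1..t}\<close> by auto
      qed
      ultimately show "y \<in> {1..t}" using i by auto
    qed
    then have "\<pi> ` {1..t} = {1..t}" using perm_image_eq[OF p] t by auto
    then show False using ir t unfolding irreducible_def by auto
  qed
qed

lemma rauzy_step_perm: "is_perm m \<pi> \<Longrightarrow> 1 \<le> m \<Longrightarrow> is_perm m (rauzy_step m c \<pi>)"
  by (cases c) (auto simp: rauzy_step_def rauzy_a_perm rauzy_b_perm)

lemma rauzy_step_irred: "is_perm m \<pi> \<Longrightarrow> irreducible m \<pi> \<Longrightarrow> 1 \<le> m \<Longrightarrow> irreducible m (rauzy_step m c \<pi>)"
  by (cases c) (auto simp: rauzy_step_def rauzy_a_irred rauzy_b_irred)

lemma class_step: "\<pi> \<in> rauzy_class m \<pi>0 \<Longrightarrow> rauzy_step m c \<pi> \<in> rauzy_class m \<pi>0"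
  unfolding rauzy_class_def rauzy_rel_def
  by (auto intro: rtrancl_into_rtrancl)

lemma class_self: "\<pi>0 \<in> rauzy_class m \<pi>0"
  unfolding rauzy_class_def by auto

lemma class_good:
  assumes "\<pi> \<in> rauzy_class m \<pi>0" "is_perm m \<pi>0" "irreducible m \<pi>0" "1 \<le> m"
  shows "is_perm m \<pi> \<and> irreducible m \<pi>"
proof -
  have "(\<pi>0, \<pi>) \<in> (rauzy_rel m)\<^sup>*" using assms(1) unfolding rauzy_class_def by auto
  then show ?thesis
  proof (induction rule: rtrancl_induct)
    case base
    then show ?case using assms by auto
  next
    case (step y z)
    then obtain c where "z = rauzy_step m c y" unfolding rauzy_rel_def by auto
    then show ?case using step rauzy_step_perm rauzy_step_irred assms(4) by auto
  qed
qed

lemma ra_low: "1 \<le> i \<Longrightarrow> i \<le> last_pre m \<pi> \<Longrightarrow> last_pre m \<pi> \<le> m \<Longrightarrow> rauzy_a m \<pi> i = \<pi> i"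
  unfolding rauzy_a_def Let_def by auto

lemma ra_shift: "last_pre m \<pi> < j \<Longrightarrow> j < m \<Longrightarrow> rauzy_a m \<pi> (j + 1) = \<pi> j"
  unfolding rauzy_a_def Let_def by auto

lemma ra_last_pre:
  assumes p: "is_perm m \<pi>" and m: "1 \<le> m"
  shows "last_pre m (rauzy_a m \<pi>) = last_pre m \<pi>"
proof -
  have K: "last_pre m \<pi> \<in> {1..m}" "\<pi> (last_pre m \<pi>) = m" using last_pre_prop[OF p m] by auto
  have "rauzy_a m \<pi> (last_pre m \<pi>) = m" using ra_low[of "last_pre m \<pi>" m \<pi>] K by auto
  then show ?thesis using last_pre_eq[OF rauzy_a_perm[OF p m] K(1)] by auto
qed

lemma rb_low: "1 \<le> i \<Longrightarrow> i \<le> m \<Longrightarrow> \<pi> i \<le> \<pi> m \<Longrightarrow> rauzy_b m \<pi> i = \<pi> i"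
  unfolding rauzy_b_def by auto

lemma rb_up: "1 \<le> i \<Longrightarrow> i \<le> m \<Longrightarrow> \<pi> m < \<pi> i \<Longrightarrow> \<pi> i < m \<Longrightarrow> rauzy_b m \<pi> i = \<pi> i + 1"
  unfolding rauzy_b_def by auto



fun pend :: "nat \<Rightarrow> (nat \<Rightarrow> nat) \<Rightarrow> rlabel list \<Rightarrow> (nat \<Rightarrow> nat)" where
  "pend m \<pi> [] = \<pi>"
| "pend m \<pi> (c # cs) = pend m (rauzy_step m c \<pi>) cs"

lemma pend_append: "pend m \<pi> (q @ r) = pend m (pend m \<pi> q) r"
  by (induction q arbitrary: \<pi>) auto

lemma pend_snoc: "pend m \<pi> (q @ [c]) = rauzy_step m c (pend m \<pi> q)"
  by (simp add: pend_append)

lemma pend_class: "\<pi> \<in> rauzy_class m \<pi>0 \<Longrightarrow> pend m \<pi> q \<in> rauzy_class m \<pi>0"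
  by (induction q arbitrary: \<pi>) (auto simp: class_step)

lemma concat_map_concat_aux:
  "concat (map f (concat xss)) = concat (map (\<lambda>xs. concat (map f xs)) xss)"
  by (induction xss) auto

lemma path_subst_append:
  "path_subst m \<pi> (q @ r) j = concat (map (path_subst m \<pi> q) (path_subst m (pend m \<pi> q) r j))"
proof (induction q arbitrary: \<pi> j)
  case Nil
  then show ?case by (induction ("path_subst m \<pi> r j")) auto
next
  case (Cons c q)
  show ?case by (simp add: Cons concat_map_concat_aux comp_def)
qed

lemma path_subst_single: "path_subst m \<pi> [c] j = step_subst m c \<pi> j"
  by simp

lemma path_subst_snoc:
  "path_subst m \<pi> (q @ [c]) j = concat (map (path_subst m \<pi> q) (step_subst m c (pend m \<pi> q) j))"
  by (simp add: path_subst_append del: path_subst.simps) (simp)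

lemma labels_path_edges: "map snd (path_edges m \<pi> q) = q"
  by (induction q arbitrary: \<pi>) auto

lemma step_subst_ne: "step_subst m c \<pi> j \<noteq> []"
  unfolding step_subst_def Let_def by (cases c) auto

lemma step_subst_ne_all: "\<forall>j. step_subst m c \<pi> j \<noteq> []"
  using step_subst_ne by blast

lemma path_subst_ne: "path_subst m \<pi> q j \<noteq> []"
proof (induction q arbitrary: \<pi> j)
  case Nil
  then show ?case by simp
next
  case (Cons c q)
  obtain x xs where "path_subst m (rauzy_step m c \<pi>) q j = x # xs"
    using Cons[of "rauzy_step m c \<pi>" j] by (cases "path_subst m (rauzy_step m c \<pi>) q j") auto
  then show ?case using step_subst_ne[of m c \<pi> x] by simp
qed

lemma step_subst_range:
  assumes "is_perm m \<pi>" "1 \<le> m" "j \<in> {1..m}"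
  shows "set (step_subst m c \<pi> j) \<subseteq> {1..m}"
proof -
  have K: "last_pre m \<pi> \<in> {1..m}" using last_pre_prop[OF assms(1,2)] by auto
  then show ?thesis using assms(3) unfolding step_subst_def Let_def by (cases c) auto
qed

lemma path_subst_range:
  assumes "is_perm m \<pi>" "1 \<le> m" "j \<in> {1..m}"
  shows "set (path_subst m \<pi> q j) \<subseteq> {1..m}"
  using assms
proof (induction q arbitrary: \<pi> j)
  case Nil
  then show ?case by simp
next
  case (Cons c q)
  have p': "is_perm m (rauzy_step m c \<pi>)" using rauzy_step_perm Cons.prems by auto
  have "set (path_subst m (rauzy_step m c \<pi>) q j) \<subseteq> {1..m}" using Cons.IH[OF p' Cons.prems(2,3)] .
  then have "\<forall>a\<in>set (path_subst m (rauzy_step m c \<pi>) q j). set (step_subst m c \<pi> a) \<subseteq> {1..m}"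
    using step_subst_range[OF Cons.prems(1,2)] by blast
  then show ?case by auto
qed

lemma step_subst_self: "j \<in> set (step_subst m c \<pi> j) \<or> c = La"
  unfolding step_subst_def Let_def by (cases c) auto

lemma step_subst_b_hd: "\<exists>t. step_subst m Lb \<pi> j = j # t"
  unfolding step_subst_def Let_def by auto

definition colstep :: "nat \<Rightarrow> rlabel \<Rightarrow> (nat \<Rightarrow> nat) \<Rightarrow> (nat \<Rightarrow> 'x set) \<Rightarrow> nat \<Rightarrow> 'x set" where
  "colstep m c \<pi> C j = (\<Union>i\<in>set (step_subst m c \<pi> j). C i)"

lemma colstep_path:
  "colstep m c (pend m \<pi> q) (\<lambda>j. set (path_subst m \<pi> q j)) = (\<lambda>j. set (path_subst m \<pi> (q @ [c]) j))"
  unfolding colstep_def by (rule ext) (simp add: path_subst_snoc del: path_subst.simps)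

lemma colstep_a:
  "colstep m La \<pi> C j = (if j \<le> last_pre m \<pi> then C j else if j = last_pre m \<pi> + 1
     then C (last_pre m \<pi>) \<union> C m else C (j - 1))"
  unfolding colstep_def step_subst_def Let_def by auto

lemma colstep_b:
  "colstep m Lb \<pi> C j = (if j = last_pre m \<pi> then C (last_pre m \<pi>) \<union> C m else C j)"
  unfolding colstep_def step_subst_def Let_def by auto

lemma rauzy_step_a: "rauzy_step m La \<pi> = rauzy_a m \<pi>"
  by (simp add: rauzy_step_def)
lemma rauzy_step_b: "rauzy_step m Lb \<pi> = rauzy_b m \<pi>"
  by (simp add: rauzy_step_def)



definition goodR :: "nat \<Rightarrow> ((nat \<Rightarrow> nat) \<times> (nat \<Rightarrow> 'x set)) set \<Rightarrow> bool" where
  "goodR m R \<longleftrightarrow> (\<forall>\<pi> C. (\<pi>, C) \<in> R \<longrightarrow> is_perm m \<pi> \<and> irreducible m \<pi> \<and> C (last_pre m \<pi>) = C m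
      \<and> (\<forall>c. (rauzy_step m c \<pi>, colstep m c \<pi> C) \<in> R))"

lemma goodR_D:
  assumes "goodR m R" "(\<pi>, C) \<in> R"
  shows "is_perm m \<pi>" "irreducible m \<pi>" "C (last_pre m \<pi>) = C m"
    "(rauzy_a m \<pi>, colstep m La \<pi> C) \<in> R" "(rauzy_b m \<pi>, colstep m Lb \<pi> C) \<in> R"
proof -
  have h: "is_perm m \<pi> \<and> irreducible m \<pi> \<and> C (last_pre m \<pi>) = C m
      \<and> (\<forall>c. (rauzy_step m c \<pi>, colstep m c \<pi> C) \<in> R)"
    using assms unfolding goodR_def by blast
  then show "is_perm m \<pi>" "irreducible m \<pi>" "C (last_pre m \<pi>) = C m" by auto
  show "(rauzy_a m \<pi>, colstep m La \<pi> C) \<in> R" using h rauzy_step_a by metis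
  show "(rauzy_b m \<pi>, colstep m Lb \<pi> C) \<in> R" using h rauzy_step_b by metis
qed

lemma rotA:
  assumes R: "goodR m R" and m: "2 \<le> m"
  shows "(\<pi>, C) \<in> R \<Longrightarrow> last_pre m \<pi> < j \<Longrightarrow> j \<le> m \<Longrightarrow> m - j = d \<Longrightarrow>
    \<exists>\<pi>' C'. (\<pi>', C') \<in> R \<and> \<pi>' m = \<pi> j \<and> C' m = C j \<and> last_pre m \<pi>' = last_pre m \<pi>
      \<and> (\<forall>i. 1 \<le> i \<longrightarrow> i \<le> last_pre m \<pi> \<longrightarrow> \<pi>' i = \<pi> i \<and> C' i = C i)"
proof (induction d arbitrary: \<pi> C j)
  case 0
  then have "j = m" by auto
  then show ?case using 0 by blast
next
  case (Suc d)
  let ?K = "last_pre m \<pi>"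
  have p: "is_perm m \<pi>" using goodR_D[OF R Suc.prems(1)] by auto
  have K: "?K \<in> {1..m}" using last_pre_prop[OF p] m by auto
  have jm: "j < m" using Suc.prems by auto
  let ?\<pi>1 = "rauzy_a m \<pi>" and ?C1 = "colstep m La \<pi> C"
  have s1: "(?\<pi>1, ?C1) \<in> R" using goodR_D[OF R Suc.prems(1)] by auto
  have K1: "last_pre m ?\<pi>1 = ?K" using ra_last_pre[OF p] m by auto
  have e1: "?\<pi>1 (j + 1) = \<pi> j" using ra_shift[of m \<pi> j] Suc.prems jm by auto
  have e2: "?C1 (j + 1) = C j" using Suc.prems unfolding colstep_a by auto
  obtain \<pi>' C' where IH: "(\<pi>', C') \<in> R" "\<pi>' m = ?\<pi>1 (j+1)" "C' m = ?C1 (j+1)"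
    "last_pre m \<pi>' = last_pre m ?\<pi>1"
    "\<forall>i. 1 \<le> i \<longrightarrow> i \<le> last_pre m ?\<pi>1 \<longrightarrow> \<pi>' i = ?\<pi>1 i \<and> C' i = ?C1 i"
  proof -
    have a1: "last_pre m ?\<pi>1 < j + 1" using K1 Suc.prems by auto
    have a2: "j + 1 \<le> m" using jm by auto
    have a3: "m - (j + 1) = d" using Suc.prems by auto
    show ?thesis using Suc.IH[OF s1 a1 a2 a3] that by blast
  qed
  have "\<forall>i. 1 \<le> i \<longrightarrow> i \<le> ?K \<longrightarrow> \<pi>' i = \<pi> i \<and> C' i = C i"
  proof (intro allI impI)
    fix i assume i: "1 \<le> i" "i \<le> ?K"
    have "?\<pi>1 i = \<pi> i" using ra_low[of i m \<pi>] i K by auto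
    moreover have "?C1 i = C i" using i unfolding colstep_a by auto
    ultimately show "\<pi>' i = \<pi> i \<and> C' i = C i" using IH(5) K1 i by auto
  qed
  then show ?case using IH e1 e2 K1 by auto
qed

lemma rotB:
  assumes R: "goodR m R" and m: "2 \<le> m"
  shows "(\<pi>, C) \<in> R \<Longrightarrow> j \<in> {1..m} \<Longrightarrow> \<pi> m < \<pi> j \<Longrightarrow> m - \<pi> j = d \<Longrightarrow>
    \<exists>\<pi>'. (\<pi>', C) \<in> R \<and> last_pre m \<pi>' = j \<and> \<pi>' m = \<pi> m
      \<and> (\<forall>i\<in>{1..m}. \<pi> i < \<pi> m \<longrightarrow> \<pi>' i = \<pi> i)"
proof (induction d arbitrary: \<pi>)
  case 0
  have p: "is_perm m \<pi>" using goodR_D[OF R 0(1)] by auto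
  have "\<pi> j \<le> m" using perm_range[OF p 0(2)] by auto
  then have "\<pi> j = m" using 0 by auto
  then have "last_pre m \<pi> = j" using last_pre_eq[OF p 0(2)] by auto
  then show ?case using 0 by blast
next
  case (Suc d)
  let ?K = "last_pre m \<pi>"
  have p: "is_perm m \<pi>" using goodR_D[OF R Suc.prems(1)] by auto
  have CK: "C ?K = C m" using goodR_D[OF R Suc.prems(1)] by auto
  have Ceq: "colstep m Lb \<pi> C = C" by (rule ext) (auto simp: colstep_b CK)
  have s1: "(rauzy_b m \<pi>, C) \<in> R" using goodR_D(5)[OF R Suc.prems(1)] Ceq by simp
  have pj: "\<pi> j < m" using Suc.prems by auto
  have e1: "rauzy_b m \<pi> j = \<pi> j + 1" using rb_up[of j m \<pi>] Suc.prems pj by auto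
  have e2: "rauzy_b m \<pi> m = \<pi> m" using rb_low[of m m \<pi>] m by auto
  have e3: "\<forall>i\<in>{1..m}. \<pi> i < \<pi> m \<longrightarrow> rauzy_b m \<pi> i = \<pi> i" using rb_low[of _ m \<pi>] by auto
  obtain \<pi>' where IH: "(\<pi>', C) \<in> R" "last_pre m \<pi>' = j" "\<pi>' m = rauzy_b m \<pi> m"
      "\<forall>i\<in>{1..m}. rauzy_b m \<pi> i < rauzy_b m \<pi> m \<longrightarrow> \<pi>' i = rauzy_b m \<pi> i"
  proof -
    have a1: "rauzy_b m \<pi> m < rauzy_b m \<pi> j" using e1 e2 Suc.prems by auto
    have a2: "m - rauzy_b m \<pi> j = d" using e1 Suc.prems by auto
    show ?thesis using Suc.IH[OF s1 Suc.prems(2) a1 a2] that by blast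
  qed
  show ?case
    apply (rule exI[of _ \<pi>'])
    using IH e2 e3 by auto
qed

lemma step1:
  assumes R: "goodR m R" and m: "2 \<le> m" and s: "(\<pi>, C) \<in> R"
    and j: "last_pre m \<pi> \<le> j" "j \<le> m"
  shows "C j = C m"
proof (cases "j = last_pre m \<pi>")
  case True
  then show ?thesis using goodR_D[OF R s] by auto
next
  case False
  have p: "is_perm m \<pi>" using goodR_D[OF R s] by auto
  have K: "last_pre m \<pi> \<in> {1..m}" using last_pre_prop[OF p] m by auto
  obtain \<pi>' C' where r: "(\<pi>', C') \<in> R" "C' m = C j" "last_pre m \<pi>' = last_pre m \<pi>"
     "\<forall>i. 1 \<le> i \<longrightarrow> i \<le> last_pre m \<pi> \<longrightarrow> \<pi>' i = \<pi> i \<and> C' i = C i"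
    using rotA[OF R m s, of j "m - j"] j False by auto
  have "C' (last_pre m \<pi>') = C' m" using goodR_D[OF R r(1)] by auto
  then show ?thesis using r K goodR_D[OF R s] by auto
qed

lemma step2:
  assumes R: "goodR m R" and m: "2 \<le> m" and s: "(\<pi>, C) \<in> R"
    and j: "j \<in> {1..m}" "\<pi> m < \<pi> j"
  shows "C j = C m"
proof -
  obtain \<pi>' where r: "(\<pi>', C) \<in> R" "last_pre m \<pi>' = j"
    using rotB[OF R m s j, of "m - \<pi> j"] by auto
  show ?thesis using goodR_D[OF R r(1)] r(2) by auto
qed

lemma caseI:
  assumes R: "goodR m R" and m: "2 \<le> m" and s: "(\<pi>, C) \<in> R"
    and j0: "j0 \<in> {1..m}" "C j0 \<noteq> C m"
    and b: "b \<in> {1..m}" "last_pre m \<pi> < b" "\<pi> b < \<pi> m"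
  shows "\<exists>\<pi>'' C''. (\<pi>'', C'') \<in> R \<and> \<pi>'' m < \<pi> m \<and> (\<exists>j\<in>{1..m}. C'' j \<noteq> C'' m)"
proof -
  have "\<not> last_pre m \<pi> \<le> j0" using step1[OF R m s, of j0] j0 by auto
  then have j0K: "j0 < last_pre m \<pi>" by auto
  obtain \<pi>'' C'' where r: "(\<pi>'', C'') \<in> R" "\<pi>'' m = \<pi> b" "C'' m = C b"
     "\<forall>i. 1 \<le> i \<longrightarrow> i \<le> last_pre m \<pi> \<longrightarrow> \<pi>'' i = \<pi> i \<and> C'' i = C i"
    using rotA[OF R m s, of b "m - b"] b by auto
  have "C b = C m" using step1[OF R m s, of b] b by auto
  moreover have "C'' j0 = C j0" using r(4) j0 j0K by auto
  ultimately have "C'' j0 \<noteq> C'' m" using r(3) j0 by simp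
  moreover have "\<pi>'' m < \<pi> m" using r(2) b by simp
  ultimately show ?thesis using r(1) j0(1) by blast
qed

lemma card_pre:
  assumes p: "is_perm m \<pi>" and v: "v \<le> m + 1"
  shows "card {b\<in>{1..m}. \<pi> b < v} = v - 1"
proof -
  let ?B = "{b\<in>{1..m}. \<pi> b < v}"
  have "inj_on \<pi> ?B" by (rule inj_on_subset[OF perm_inj[OF p]]) auto
  then have c: "card (\<pi> ` ?B) = card ?B" by (rule card_image)
  have "\<pi> ` ?B = {1..v-1}"
  proof
    show "\<pi> ` ?B \<subseteq> {1..v-1}" using perm_range[OF p] by fastforce
    show "{1..v-1} \<subseteq> \<pi> ` ?B"
    proof
      fix y assume y: "y \<in> {1..v-1}"
      then have "y \<in> {1..m}" using v by auto
      then obtain b where "b \<in> {1..m}" "\<pi> b = y" using perm_surj[OF p] by blast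
      then show "y \<in> \<pi> ` ?B" using y by force
    qed
  qed
  then show ?thesis using c by simp
qed

lemma core_main:
  assumes R: "goodR m R" and m: "2 \<le> m"
  shows "(\<pi>, C) \<in> R \<Longrightarrow> \<pi> m = v \<Longrightarrow> \<forall>j\<in>{1..m}. C j = C m"
proof (induction v arbitrary: \<pi> C rule: less_induct)
  case (less v)
  show ?case
  proof (rule ccontr)
    assume "\<not> (\<forall>j\<in>{1..m}. C j = C m)"
    then obtain j0 where j0: "j0 \<in> {1..m}" "C j0 \<noteq> C m" by blast
    have s: "(\<pi>, C) \<in> R" using less.prems by simp
    have p: "is_perm m \<pi>" and ir: "irreducible m \<pi>" using goodR_D[OF R s] by auto
    let ?K = "last_pre m \<pi>"
    have K: "?K \<in> {1..m}" "\<pi> ?K = m" using last_pre_prop[OF p] m by auto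
    have Km: "?K < m" using last_pre_lt[OF p ir m] .
    have vv: "\<pi> m = v" using less.prems by simp
    have "\<pi> m \<in> {1..m}" using perm_range[OF p, of m] m by simp
    moreover have "\<pi> m \<noteq> m" using irred_last[OF p ir m] .
    ultimately have vm: "v \<in> {1..m}" "v \<noteq> m" using vv by auto
    have j0m: "j0 \<noteq> m" using j0 by auto
    have "\<pi> j0 \<noteq> \<pi> m" using perm_eq_iff[OF p j0(1), of m] j0m m by simp
    then have "\<pi> j0 \<noteq> v" using vv by simp
    moreover have "\<not> v < \<pi> j0" using step2[OF R m s j0(1)] j0(2) vv by blast
    ultimately have pj0: "\<pi> j0 < v" by auto
    have pj0': "1 \<le> \<pi> j0" using perm_range[OF p j0(1)] by auto
    show False
    proof (cases "\<exists>b\<in>{1..m}. ?K < b \<and> \<pi> b < v")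
      case True
      then obtain b where b: "b \<in> {1..m}" "?K < b" "\<pi> b < \<pi> m" using vv by blast
      obtain \<pi>'' C'' where r: "(\<pi>'', C'') \<in> R" "\<pi>'' m < \<pi> m" "\<exists>j\<in>{1..m}. C'' j \<noteq> C'' m"
        using caseI[OF R m s j0 b] by blast
      have lt: "\<pi>'' m < v" using r(2) vv by simp
      have "\<forall>j\<in>{1..m}. C'' j = C'' m" using less.IH[OF lt r(1) refl] .
      then show False using r(3) by blast
    next
      case False
      show False
      proof (cases "\<forall>i\<in>{1..v-1}. \<pi> i < v")
        case True
        have "\<pi> ` {1..v-1} \<subseteq> {1..v-1}"
        proof
          fix y assume "y \<in> \<pi> ` {1..v-1}"
          then obtain i where i: "i \<in> {1..v-1}" "y = \<pi> i" by auto
          then have "i \<in> {1..m}" using vm by auto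
          then show "y \<in> {1..v-1}" using True i perm_range[OF p] by fastforce
        qed
        moreover have "v - 1 \<le> m" using vm by auto
        ultimately have "\<pi> ` {1..v-1} = {1..v-1}" using perm_image_eq[OF p] by blast
        moreover have "1 \<le> v - 1" "v - 1 < m" using pj0 pj0' vm by auto
        ultimately show False using ir unfolding irreducible_def by blast
      next
        case False2: False
        then obtain i where i: "i \<in> {1..v-1}" "v \<le> \<pi> i" by auto
        have im: "i \<in> {1..m}" "i \<noteq> m" using i vm by auto
        have "\<pi> i \<noteq> \<pi> m" using perm_eq_iff[OF p im(1), of m] im m by simp
        then have "\<pi> i \<noteq> v" using vv by simp
        then have piv: "v < \<pi> i" using i by auto
        have "\<exists>b\<in>{1..m}. \<pi> b < v \<and> i < b"
        proof (rule ccontr)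
          assume nb: "\<not> (\<exists>b\<in>{1..m}. \<pi> b < v \<and> i < b)"
          have "{b\<in>{1..m}. \<pi> b < v} \<subseteq> {1..i-1}"
          proof
            fix b assume b: "b \<in> {b\<in>{1..m}. \<pi> b < v}"
            then have "b \<le> i" using nb by auto
            moreover have "b \<noteq> i" using b piv by auto
            ultimately show "b \<in> {1..i-1}" using b by auto
          qed
          then have "card {b\<in>{1..m}. \<pi> b < v} \<le> card {1..i-1}" by (rule card_mono[rotated]) auto
          then have "v - 1 \<le> i - 1" using card_pre[OF p, of v] vm by auto
          then show False using i by auto
        qed
        then obtain b where b: "b \<in> {1..m}" "\<pi> b < v" "i < b" by auto
        obtain \<pi>' where r: "(\<pi>', C) \<in> R" "last_pre m \<pi>' = i" "\<pi>' m = \<pi> m"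
           "\<forall>i\<in>{1..m}. \<pi> i < \<pi> m \<longrightarrow> \<pi>' i = \<pi> i"
          using rotB[OF R m s im(1), of "m - \<pi> i"] piv vv by blast
        have "\<pi>' b = \<pi> b" using r(4) b vv by blast
        then have b': "b \<in> {1..m}" "last_pre m \<pi>' < b" "\<pi>' b < \<pi>' m" using b r(2,3) vv by auto
        obtain \<pi>'' C'' where r2: "(\<pi>'', C'') \<in> R" "\<pi>'' m < \<pi>' m" "\<exists>j\<in>{1..m}. C'' j \<noteq> C'' m"
          using caseI[OF R m r(1) j0 b'] by blast
        have lt: "\<pi>'' m < v" using r2(2) r(3) vv by simp
        have "\<forall>j\<in>{1..m}. C'' j = C'' m" using less.IH[OF lt r2(1) refl] .
        then show False using r2(3) by blast
      qed
    qed
  qed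
qed

lemma core:
  assumes R: "goodR m R" and m: "2 \<le> m" and s: "(\<pi>, C) \<in> R"
  shows "\<forall>j\<in>{1..m}. C j = C m"
  using core_main[OF R m s refl] .



lemma exists_std:
  assumes m: "2 \<le> m" and p0: "is_perm m \<pi>0" and i0: "irreducible m \<pi>0"
  shows "\<exists>\<pi>\<in>rauzy_class m \<pi>0. \<pi> 1 = m"
proof (rule ccontr)
  assume nex: "\<not> (\<exists>\<pi>\<in>rauzy_class m \<pi>0. \<pi> 1 = m)"
  define Ci :: "nat \<Rightarrow> nat set" where "Ci = (\<lambda>j. if j = 1 then {1} else {})"
  define R where "R = {(\<pi>, Ci) | \<pi>. \<pi> \<in> rauzy_class m \<pi>0}"
  have R: "goodR m R" unfolding goodR_def
  proof (intro allI impI)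
    fix \<pi> C assume "(\<pi>, C) \<in> R"
    then have pc: "\<pi> \<in> rauzy_class m \<pi>0" and C: "C = Ci" unfolding R_def by auto
    have pi: "is_perm m \<pi>" "irreducible m \<pi>" using class_good[OF pc p0 i0] m by auto
    have K: "last_pre m \<pi> \<in> {1..m}" "\<pi> (last_pre m \<pi>) = m" using last_pre_prop[OF pi(1)] m by auto
    have K1: "last_pre m \<pi> \<noteq> 1" using nex pc K by metis
    have cs: "colstep m c \<pi> Ci = Ci" for c
    proof (rule ext)
      fix j show "colstep m c \<pi> Ci j = Ci j"
        using K K1 m by (cases c) (auto simp: colstep_a colstep_b Ci_def)
    qed
    have "C (last_pre m \<pi>) = C m" using K1 m C unfolding Ci_def by auto
    moreover have "\<forall>c. (rauzy_step m c \<pi>, colstep m c \<pi> C) \<in> R"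
      using cs C class_step[OF pc] unfolding R_def by auto
    ultimately show "is_perm m \<pi> \<and> irreducible m \<pi> \<and> C (last_pre m \<pi>) = C m
      \<and> (\<forall>c. (rauzy_step m c \<pi>, colstep m c \<pi> C) \<in> R)" using pi by blast
  qed
  have "(\<pi>0, Ci) \<in> R" unfolding R_def using class_self by auto
  then have "Ci 1 = Ci m" using core[OF R m] m by auto
  then show False using m unfolding Ci_def by auto
qed

definition csum :: "nat \<Rightarrow> (nat \<Rightarrow> 'x set) \<Rightarrow> nat" where
  "csum m C = (\<Sum>j\<in>{1..m}. card (C j))"

definition full :: "nat \<Rightarrow> (nat \<Rightarrow> nat set) \<Rightarrow> bool" where
  "full m C \<longleftrightarrow> (\<forall>j\<in>{1..m}. {1..m} \<subseteq> C j)"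

lemma rho_bij:
  assumes "1 \<le> K" "K \<le> m"
  shows "bij_betw (rho_a m K) {1..m} {1..m}"
proof -
  have inj: "inj_on (rho_a m K) {1..m}" using rho_a_inj assms by auto
  have "rho_a m K ` {1..m} \<subseteq> {1..m}" using rho_a_range assms by auto
  then show ?thesis using inj subset_card_eq_fin[OF inj] unfolding bij_betw_def by auto
qed

lemma mono_a:
  assumes p: "is_perm m \<pi>" and ir: "irreducible m \<pi>" and m: "2 \<le> m"
    and fin: "\<forall>j. finite (C j)"
  shows "csum m C \<le> csum m (colstep m La \<pi> C)"
    "csum m (colstep m La \<pi> C) = csum m C \<Longrightarrow> C (last_pre m \<pi>) \<subseteq> C m"
proof -
  let ?K = "last_pre m \<pi>"
  let ?C' = "colstep m La \<pi> C"
  have K: "?K \<in> {1..m}" using last_pre_prop[OF p] m by auto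
  have Km: "?K < m" using last_pre_lt[OF p ir m] .
  have sub: "C (rho_a m ?K j) \<subseteq> ?C' j" for j
    unfolding colstep_a rho_a_def by auto
  have fin': "finite (?C' j)" for j unfolding colstep_a using fin by auto
  have eq: "csum m C = (\<Sum>j\<in>{1..m}. card (C (rho_a m ?K j)))"
    unfolding csum_def using sum.reindex_bij_betw[OF rho_bij[of ?K m], of "\<lambda>j. card (C j)"] K by auto
  have le: "\<forall>j\<in>{1..m}. card (C (rho_a m ?K j)) \<le> card (?C' j)"
    using sub fin' by (simp add: card_mono)
  show "csum m C \<le> csum m ?C'" unfolding eq by (unfold csum_def, rule sum_mono) (use le in auto)
  show "csum m ?C' = csum m C \<Longrightarrow> C ?K \<subseteq> C m"
  proof (rule ccontr)
    assume e: "csum m ?C' = csum m C" and ns: "\<not> C ?K \<subseteq> C m"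
    have r1: "rho_a m ?K (?K + 1) = m" unfolding rho_a_def by auto
    have c1: "?C' (?K + 1) = C ?K \<union> C m" unfolding colstep_a by auto
    have "card (C m) < card (C ?K \<union> C m)"
      using ns fin by (intro psubset_card_mono) auto
    then have "card (C (rho_a m ?K (?K+1))) < card (?C' (?K+1))" using r1 c1 by simp
    moreover have "?K + 1 \<in> {1..m}" using Km by auto
    ultimately have "(\<Sum>j\<in>{1..m}. card (C (rho_a m ?K j))) < (\<Sum>j\<in>{1..m}. card (?C' j))"
      using le by (intro sum_strict_mono_ex1) auto
    then show False using e eq unfolding csum_def by auto
  qed
qed

lemma mono_b:
  assumes p: "is_perm m \<pi>" and m: "2 \<le> m"
    and fin: "\<forall>j. finite (C j)"
  shows "csum m C \<le> csum m (colstep m Lb \<pi> C)"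
    "csum m (colstep m Lb \<pi> C) = csum m C \<Longrightarrow> C m \<subseteq> C (last_pre m \<pi>)"
proof -
  let ?K = "last_pre m \<pi>"
  let ?C' = "colstep m Lb \<pi> C"
  have K: "?K \<in> {1..m}" using last_pre_prop[OF p] m by auto
  have sub: "C j \<subseteq> ?C' j" for j
    unfolding colstep_b by auto
  have fin': "finite (?C' j)" for j unfolding colstep_b using fin by auto
  have le: "\<forall>j\<in>{1..m}. card (C j) \<le> card (?C' j)"
    using sub fin' by (simp add: card_mono)
  show "csum m C \<le> csum m ?C'" by (unfold csum_def, rule sum_mono) (use le in auto)
  show "csum m ?C' = csum m C \<Longrightarrow> C m \<subseteq> C ?K"
  proof (rule ccontr)
    assume e: "csum m ?C' = csum m C" and ns: "\<not> C m \<subseteq> C ?K"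
    have c1: "?C' ?K = C ?K \<union> C m" unfolding colstep_b by auto
    have "card (C ?K) < card (C ?K \<union> C m)"
      using ns fin by (intro psubset_card_mono) auto
    then have "card (C ?K) < card (?C' ?K)" using c1 by simp
    then have "(\<Sum>j\<in>{1..m}. card (C j)) < (\<Sum>j\<in>{1..m}. card (?C' j))"
      using le K by (intro sum_strict_mono_ex1) auto
    then show False using e unfolding csum_def by auto
  qed
qed

lemma step_cover:
  assumes p: "is_perm m \<pi>" and ir: "irreducible m \<pi>" and m: "2 \<le> m" and i: "i \<in> {1..m}"
  shows "\<exists>c\<in>{1..m}. i \<in> set (step_subst m x \<pi> c)"
proof -
  let ?K = "last_pre m \<pi>"
  have K: "?K \<in> {1..m}" using last_pre_prop[OF p] m by auto
  have Km: "?K < m" using last_pre_lt[OF p ir m] .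
  show ?thesis
  proof (cases x)
    case La
    show ?thesis
    proof (cases "i \<le> ?K")
      case True
      then show ?thesis using i La by (intro bexI[of _ i]) (auto simp: step_subst_def Let_def)
    next
      case False
      show ?thesis
      proof (cases "i = m")
        case True
        then show ?thesis using Km La by (intro bexI[of _ "?K + 1"]) (auto simp: step_subst_def Let_def)
      next
        case False2: False
        then show ?thesis using i La False by (intro bexI[of _ "i + 1"]) (auto simp: step_subst_def Let_def)
      qed
    qed
  next
    case Lb
    then show ?thesis using i by (intro bexI[of _ i]) (auto simp: step_subst_def Let_def)
  qed
qed

lemma path_cover:
  assumes m: "2 \<le> m"
  shows "is_perm m \<pi> \<Longrightarrow> irreducible m \<pi> \<Longrightarrow> i \<in> {1..m} \<Longrightarrow> \<exists>c\<in>{1..m}. i \<in> set (path_subst m \<pi> q c)"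
proof (induction q arbitrary: \<pi> i)
  case Nil
  then show ?case by auto
next
  case (Cons x q)
  obtain l where l: "l \<in> {1..m}" "i \<in> set (step_subst m x \<pi> l)" using step_cover[OF Cons.prems(1,2) m Cons.prems(3)] by blast
  have p': "is_perm m (rauzy_step m x \<pi>)" "irreducible m (rauzy_step m x \<pi>)"
    using rauzy_step_perm rauzy_step_irred Cons.prems m by auto
  obtain c where c: "c \<in> {1..m}" "l \<in> set (path_subst m (rauzy_step m x \<pi>) q c)"
    using Cons.IH[OF p' l(1)] by blast
  then show ?case using l by (intro bexI[of _ c]) auto
qed

lemma csum_bound:
  assumes "\<forall>j\<in>{1..m}. C j \<subseteq> {1..m}"
  shows "csum m C \<le> m * m"
proof -
  have "\<forall>j\<in>{1..m}. card (C j) \<le> m"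
    using assms card_mono[of "{1..m}"] by fastforce
  then have "csum m C \<le> (\<Sum>j\<in>{1..m}. m)" unfolding csum_def by (intro sum_mono) blast
  then show ?thesis by simp
qed

lemma grow:
  assumes m: "2 \<le> m" and p0: "is_perm m \<pi>0" and i0: "irreducible m \<pi>0"
    and pc: "\<pi> \<in> rauzy_class m \<pi>0"
    and nf: "\<not> full m (\<lambda>j. set (path_subst m \<pi> q j))"
  shows "\<exists>r. csum m (\<lambda>j. set (path_subst m \<pi> q j)) < csum m (\<lambda>j. set (path_subst m \<pi> (q @ r) j))"
proof (rule ccontr)
  define S where "S = (\<lambda>r j. set (path_subst m \<pi> (q @ r) j))"
  assume "\<not> (\<exists>r. csum m (\<lambda>j. set (path_subst m \<pi> q j)) < csum m (\<lambda>j. set (path_subst m \<pi> (q @ r) j)))"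
  then have up: "\<forall>r. csum m (S r) \<le> csum m (S [])" unfolding S_def by (auto simp: not_less)
  have good: "is_perm m (pend m \<pi> (q @ r)) \<and> irreducible m (pend m \<pi> (q @ r))" for r
    using class_good[OF pend_class[OF pc] p0 i0] m by auto
  have stp: "colstep m c (pend m \<pi> (q @ r)) (S r) = S (r @ [c])" for r c
    unfolding S_def using colstep_path[of m c \<pi> "q @ r"] by simp
  have fin: "\<forall>j. finite (S r j)" for r unfolding S_def by auto
  have mono: "csum m (S r) \<le> csum m (S (r @ [c]))" for r c
  proof (cases c)
    case La
    then show ?thesis using mono_a(1)[OF conjunct1[OF good] conjunct2[OF good] m fin] stp by metis
  next
    case Lb
    then show ?thesis using mono_b(1)[OF conjunct1[OF good] m fin] stp by metis
  qed
  have ge: "csum m (S []) \<le> csum m (S r)" for r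
  proof (induction r rule: rev_induct)
    case Nil
    then show ?case by simp
  next
    case (snoc c r)
    then show ?case using mono[where r=r and c=c] by simp
  qed
  have eqs: "csum m (S r) = csum m (S [])" for r using ge[of r] up by (simp add: antisym)
  define R where "R = {(pend m \<pi> (q @ r), S r) | r. True}"
  have R: "goodR m R" unfolding goodR_def
  proof (intro allI impI)
    fix \<pi>' C assume "(\<pi>', C) \<in> R"
    then obtain r where r: "\<pi>' = pend m \<pi> (q @ r)" "C = S r" unfolding R_def by auto
    have e1: "csum m (colstep m La \<pi>' C) = csum m C" using stp[where r=r and c=La] eqs[of r] eqs[of "r @ [La]"] r by simp
    have e2: "csum m (colstep m Lb \<pi>' C) = csum m C" using stp[where r=r and c=Lb] eqs[of r] eqs[of "r @ [Lb]"] r by simp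
    have "C (last_pre m \<pi>') \<subseteq> C m"
      using mono_a(2)[OF conjunct1[OF good] conjunct2[OF good] m fin] e1 r by metis
    moreover have "C m \<subseteq> C (last_pre m \<pi>')"
      using mono_b(2)[OF conjunct1[OF good] m fin] e2 r by metis
    moreover have "\<forall>c. (rauzy_step m c \<pi>', colstep m c \<pi>' C) \<in> R"
    proof
      fix c
      have "rauzy_step m c \<pi>' = pend m \<pi> (q @ (r @ [c]))" using r pend_snoc[of m \<pi> "q @ r" c] by simp
      then show "(rauzy_step m c \<pi>', colstep m c \<pi>' C) \<in> R" unfolding R_def using stp r by auto
    qed
    ultimately show "is_perm m \<pi>' \<and> irreducible m \<pi>' \<and> C (last_pre m \<pi>') = C m
      \<and> (\<forall>c. (rauzy_step m c \<pi>', colstep m c \<pi>' C) \<in> R)" using good r by auto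
  qed
  have "(pend m \<pi> (q @ []), S []) \<in> R" unfolding R_def by blast
  then have const: "\<forall>j\<in>{1..m}. S [] j = S [] m" using core[OF R m] by blast
  have "full m (S [])" unfolding full_def
  proof (intro ballI subsetI)
    fix j i assume j: "j \<in> {1..m}" and i: "i \<in> {1..m}"
    have pp: "is_perm m \<pi>" "irreducible m \<pi>" using class_good[OF pc p0 i0] m by auto
    obtain c where c: "c \<in> {1..m}" "i \<in> S [] c"
      using path_cover[OF m pp i, of q] unfolding S_def by auto
    then show "i \<in> S [] j" using const j by metis
  qed
  then show False using nf unfolding S_def by simp
qed



lemma positive_path:
  assumes m: "2 \<le> m" and p0: "is_perm m \<pi>0" and i0: "irreducible m \<pi>0"
    and pc: "\<pi> \<in> rauzy_class m \<pi>0"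
  shows "\<exists>r. full m (\<lambda>j. set (path_subst m \<pi> r j))"
proof -
  have pp: "is_perm m \<pi>" using class_good[OF pc p0 i0] m by auto
  have bound: "csum m (\<lambda>j. set (path_subst m \<pi> q j)) \<le> m * m" for q
    using csum_bound path_subst_range[OF pp] m by auto
  have main: "\<forall>q. m * m - csum m (\<lambda>j. set (path_subst m \<pi> q j)) = n \<longrightarrow>
      (\<exists>r. full m (\<lambda>j. set (path_subst m \<pi> (q @ r) j)))" for n
  proof (induction n rule: less_induct)
    case (less n)
    show ?case
    proof (intro allI impI)
      fix q assume qn: "m * m - csum m (\<lambda>j. set (path_subst m \<pi> q j)) = n"
      show "\<exists>r. full m (\<lambda>j. set (path_subst m \<pi> (q @ r) j))"
      proof (cases "full m (\<lambda>j. set (path_subst m \<pi> q j))")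
        case True
        then show ?thesis by (intro exI[of _ "[]"]) simp
      next
        case False
        obtain r1 where r1: "csum m (\<lambda>j. set (path_subst m \<pi> q j)) < csum m (\<lambda>j. set (path_subst m \<pi> (q @ r1) j))"
          using grow[OF m p0 i0 pc False] by blast
        have lt: "m * m - csum m (\<lambda>j. set (path_subst m \<pi> (q @ r1) j)) < n"
          using r1 bound[of "q @ r1"] qn by linarith
        obtain r2 where "full m (\<lambda>j. set (path_subst m \<pi> ((q @ r1) @ r2) j))"
          using less.IH[OF lt] by blast
        then show ?thesis by (intro exI[of _ "r1 @ r2"]) simp
      qed
    qed
  qed
  obtain r where "full m (\<lambda>j. set (path_subst m \<pi> ([] @ r) j))"
    using main[of "m * m - csum m (\<lambda>j. set (path_subst m \<pi> [] j))"] by blast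
  then show ?thesis by auto
qed

definition genZ :: "nat \<Rightarrow> (nat \<Rightarrow> nat list) \<Rightarrow> bool" where
  "genZ m w \<longleftrightarrow> (\<forall>x :: nat \<Rightarrow> int. \<exists>d :: nat \<Rightarrow> int.
      \<forall>i\<in>{1..m}. x i = (\<Sum>k=1..m. d k * int (count_list (w k) i)))"

lemma genZ_gen: "genZ m u = generates_Zm m (\<lambda>k. pop_vec (u k))"
  unfolding genZ_def generates_Zm_def pop_vec_def by simp

lemma genZ_cong:
  assumes "\<forall>k\<in>{1..m}. w k = w' k" "genZ m w"
  shows "genZ m w'"
  unfolding genZ_def
proof
  fix x :: "nat \<Rightarrow> int"
  obtain d where d: "\<forall>i\<in>{1..m}. x i = (\<Sum>k=1..m. d k * int (count_list (w k) i))"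
    using assms(2) unfolding genZ_def by blast
  have "\<forall>i\<in>{1..m}. x i = (\<Sum>k=1..m. d k * int (count_list (w' k) i))"
    using d assms(1) by auto
  then show "\<exists>d. \<forall>i\<in>{1..m}. x i = (\<Sum>k=1..m. d k * int (count_list (w' k) i))" by blast
qed

lemma count_concat:
  fixes m :: nat and w :: "nat list"
  assumes "set w \<subseteq> {1..m}"
  shows "int (count_list (concat (map \<sigma> w)) i) =
    (\<Sum>l=1..m. int (count_list w l) * int (count_list (\<sigma> l) i))"
  using assms
proof (induction w)
  case Nil
  then show ?case by simp
next
  case (Cons a w)
  have a: "a \<in> {1..m}" using Cons.prems by auto
  have "(\<Sum>l=1..m. int (count_list (a # w) l) * int (count_list (\<sigma> l) i)) =
     (\<Sum>l=1..m. (if l = a then int (count_list (\<sigma> l) i) else 0) + int (count_list w l) * int (count_list (\<sigma> l) i))"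
    by (rule sum.cong) (auto simp: algebra_simps)
  also have "\<dots> = int (count_list (\<sigma> a) i) + (\<Sum>l=1..m. int (count_list w l) * int (count_list (\<sigma> l) i))"
    using a by (simp add: sum.distrib sum.delta)
  finally show ?case using Cons by simp
qed

lemma genZ_comp:
  assumes s: "genZ m \<sigma>" and z: "genZ m \<zeta>" and r: "\<forall>k\<in>{1..m}. set (\<zeta> k) \<subseteq> {1..m}"
  shows "genZ m (\<lambda>k. concat (map \<sigma> (\<zeta> k)))"
  unfolding genZ_def
proof
  fix x :: "nat \<Rightarrow> int"
  obtain c where c: "\<forall>i\<in>{1..m}. x i = (\<Sum>l=1..m. c l * int (count_list (\<sigma> l) i))"
    using s unfolding genZ_def by blast
  obtain d where d: "\<forall>l\<in>{1..m}. c l = (\<Sum>k=1..m. d k * int (count_list (\<zeta> k) l))"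
    using z unfolding genZ_def by blast
  have "\<forall>i\<in>{1..m}. x i = (\<Sum>k=1..m. d k * int (count_list (concat (map \<sigma> (\<zeta> k))) i))"
  proof
    fix i assume i: "i \<in> {1..m}"
    have "(\<Sum>k=1..m. d k * int (count_list (concat (map \<sigma> (\<zeta> k))) i))
        = (\<Sum>k=1..m. d k * (\<Sum>l=1..m. int (count_list (\<zeta> k) l) * int (count_list (\<sigma> l) i)))"
    proof (rule sum.cong)
      fix k assume k: "k \<in> {1..m}"
      show "d k * int (count_list (concat (map \<sigma> (\<zeta> k))) i) =
        d k * (\<Sum>l=1..m. int (count_list (\<zeta> k) l) * int (count_list (\<sigma> l) i))"
        by (rule arg_cong[where f = "\<lambda>v. d k * v"]) (rule count_concat[OF r[rule_format, OF k]])
    qed simp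
    also have "\<dots> = (\<Sum>k=1..m. \<Sum>l=1..m. d k * int (count_list (\<zeta> k) l) * int (count_list (\<sigma> l) i))"
      by (simp add: sum_distrib_left mult.assoc)
    also have "\<dots> = (\<Sum>l=1..m. \<Sum>k=1..m. d k * int (count_list (\<zeta> k) l) * int (count_list (\<sigma> l) i))"
      by (rule sum.swap)
    also have "\<dots> = (\<Sum>l=1..m. c l * int (count_list (\<sigma> l) i))"
      using d by (simp add: sum_distrib_right)
    also have "\<dots> = x i" using c i by simp
    finally show "x i = (\<Sum>k=1..m. d k * int (count_list (concat (map \<sigma> (\<zeta> k))) i))" by simp
  qed
  then show "\<exists>d. \<forall>i\<in>{1..m}. x i = (\<Sum>k=1..m. d k * int (count_list (concat (map \<sigma> (\<zeta> k))) i))" by blast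
qed

lemma genZ_perm:
  assumes b: "bij_betw \<rho> {1..m} {1..m}"
  shows "genZ m (\<lambda>k. [\<rho> k])"
  unfolding genZ_def
proof
  fix x :: "nat \<Rightarrow> int"
  have "\<forall>i\<in>{1..m}. x i = (\<Sum>k=1..m. x (\<rho> k) * int (count_list [\<rho> k] i))"
  proof
    fix i assume i: "i \<in> {1..m}"
    have "(\<Sum>k=1..m. x (\<rho> k) * int (count_list [\<rho> k] i)) = (\<Sum>k=1..m. (\<lambda>l. if l = i then x l else 0) (\<rho> k))"
      by (rule sum.cong) auto
    also have "\<dots> = (\<Sum>l=1..m. (\<lambda>l. if l = i then x l else 0) l)"
      by (rule sum.reindex_bij_betw[OF b])
    also have "\<dots> = x i" using i by (simp add: sum.delta)
    finally show "x i = (\<Sum>k=1..m. x (\<rho> k) * int (count_list [\<rho> k] i))" by simp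
  qed
  then show "\<exists>d. \<forall>i\<in>{1..m}. x i = (\<Sum>k=1..m. d k * int (count_list [\<rho> k] i))"
    by (intro exI[of _ "\<lambda>k. x (\<rho> k)"])
qed

lemma genZ_el:
  assumes st: "s \<in> {1..m}" "t \<in> {1..m}" "s \<noteq> t"
    and w: "\<forall>k\<in>{1..m}. \<forall>i. int (count_list (w k) i) = (if k = i then 1 else 0) + (if k = s \<and> i = t then 1 else 0)"
  shows "genZ m w"
  unfolding genZ_def
proof
  fix x :: "nat \<Rightarrow> int"
  define d where "d = x(t := x t - x s)"
  have "\<forall>i\<in>{1..m}. x i = (\<Sum>k=1..m. d k * int (count_list (w k) i))"
  proof
    fix i assume i: "i \<in> {1..m}"
    have "(\<Sum>k=1..m. d k * int (count_list (w k) i)) =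
        (\<Sum>k=1..m. (if k = i then d k else 0) + (if k = s then (if i = t then d k else 0) else 0))"
      using w by (intro sum.cong) (auto simp: algebra_simps)
    also have "\<dots> = d i + (if i = t then d s else 0)"
      using i st by (simp add: sum.distrib sum.delta)
    also have "\<dots> = x i" unfolding d_def using st by auto
    finally show "x i = (\<Sum>k=1..m. d k * int (count_list (w k) i))" by simp
  qed
  then show "\<exists>d. \<forall>i\<in>{1..m}. x i = (\<Sum>k=1..m. d k * int (count_list (w k) i))" by blast
qed

lemma genZ_step:
  assumes p: "is_perm m \<pi>" and ir: "irreducible m \<pi>" and m: "2 \<le> m"
  shows "genZ m (step_subst m c \<pi>)"
proof -
  let ?K = "last_pre m \<pi>"
  have K: "?K \<in> {1..m}" using last_pre_prop[OF p] m by auto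
  have Km: "?K < m" using last_pre_lt[OF p ir m] .
  show ?thesis
  proof (cases c)
    case Lb
    have "\<forall>k\<in>{1..m}. \<forall>i. int (count_list (step_subst m Lb \<pi> k) i) =
        (if k = i then 1 else 0) + (if k = ?K \<and> i = m then 1 else 0)"
      using Km unfolding step_subst_def Let_def by auto
    then show ?thesis using genZ_el[of ?K m m "step_subst m Lb \<pi>"] K Km Lb by auto
  next
    case La
    define e where "e = (\<lambda>j::nat. if j = m then [?K, m] else [j])"
    have ge: "genZ m e"
    proof (rule genZ_el[of m m ?K])
      show "\<forall>k\<in>{1..m}. \<forall>i. int (count_list (e k) i) = (if k = i then 1 else 0) + (if k = m \<and> i = ?K then 1 else 0)"
        using Km unfolding e_def by auto
    qed (use K Km in auto)
    have gp: "genZ m (\<lambda>k. [rho_a m ?K k])" using genZ_perm[OF rho_bij[of ?K m]] K by auto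
    have rr: "\<forall>k\<in>{1..m}. set [rho_a m ?K k] \<subseteq> {1..m}" using rho_a_range K by auto
    have g: "genZ m (\<lambda>k. concat (map e [rho_a m ?K k]))" using genZ_comp[OF ge gp rr] .
    have "\<forall>k\<in>{1..m}. concat (map e [rho_a m ?K k]) = step_subst m La \<pi> k"
      using Km unfolding e_def rho_a_def step_subst_def Let_def by auto
    then show ?thesis using genZ_cong[OF _ g] La by auto
  qed
qed

lemma genZ_path:
  assumes m: "2 \<le> m"
  shows "is_perm m \<pi> \<Longrightarrow> irreducible m \<pi> \<Longrightarrow> genZ m (path_subst m \<pi> q)"
proof (induction q arbitrary: \<pi>)
  case Nil
  have "genZ m (\<lambda>k. [id k])" by (rule genZ_perm) (rule bij_betw_id)
  then show ?case by simp
next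
  case (Cons c q)
  have p': "is_perm m (rauzy_step m c \<pi>)" "irreducible m (rauzy_step m c \<pi>)"
    using rauzy_step_perm rauzy_step_irred Cons.prems m by auto
  have z: "genZ m (path_subst m (rauzy_step m c \<pi>) q)" using Cons.IH[OF p'] .
  have r: "\<forall>k\<in>{1..m}. set (path_subst m (rauzy_step m c \<pi>) q k) \<subseteq> {1..m}"
    using path_subst_range[OF p'(1)] m by auto
  have "genZ m (\<lambda>k. concat (map (step_subst m c \<pi>) (path_subst m (rauzy_step m c \<pi>) q k)))"
    using genZ_comp[OF genZ_step[OF Cons.prems m] z r] .
  then show ?case by simp
qed

lemma genZ_cover:
  assumes g: "genZ m w" and i: "i \<in> {1..m}"
  shows "\<exists>c\<in>{1..m}. i \<in> set (w c)"
proof (rule ccontr)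
  assume n: "\<not> (\<exists>c\<in>{1..m}. i \<in> set (w c))"
  obtain d where d: "\<forall>j\<in>{1..m}. (if j = i then 1 else 0 :: int) = (\<Sum>k=1..m. d k * int (count_list (w k) j))"
    using g unfolding genZ_def by (elim allE[of _ "\<lambda>j. if j = i then 1 else 0"]) blast
  have "(\<Sum>k=1..m. d k * int (count_list (w k) i)) = 0"
    using n by (intro sum.neutral) (auto simp: count_list_0_iff)
  moreover have "(if i = i then 1 else 0 :: int) = (\<Sum>k=1..m. d k * int (count_list (w k) i))"
    using d i by blast
  ultimately show False by simp
qed



lemma finite_perms: "finite {\<pi>. is_perm m \<pi>}"
proof -
  let ?f = "\<lambda>\<pi>::nat\<Rightarrow>nat. map \<pi> [1..<m+1]"
  have inj: "inj_on ?f {\<pi>. is_perm m \<pi>}"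
  proof (rule inj_onI)
    fix \<pi> \<sigma> assume a: "\<pi> \<in> {\<pi>. is_perm m \<pi>}" "\<sigma> \<in> {\<pi>. is_perm m \<pi>}" "?f \<pi> = ?f \<sigma>"
    show "\<pi> = \<sigma>"
    proof (rule ext)
      fix j show "\<pi> j = \<sigma> j"
      proof (cases "j \<in> {1..m}")
        case True
        have "\<forall>x\<in>set [1..<m+1]. \<pi> x = \<sigma> x" using a(3) by (simp only: map_eq_conv)
        moreover have "j \<in> set [1..<m+1]" using True by auto
        ultimately show ?thesis by blast
      next
        case False
        then show ?thesis using a(1,2) unfolding is_perm_def by auto
      qed
    qed
  qed
  have "?f ` {\<pi>. is_perm m \<pi>} \<subseteq> {xs. set xs \<subseteq> {1..m} \<and> length xs = m}"
    using perm_range by fastforce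
  moreover have "finite {xs. set xs \<subseteq> {1..m::nat} \<and> length xs = m}"
    by (rule finite_lists_length_eq) simp
  ultimately have "finite (?f ` {\<pi>. is_perm m \<pi>})" by (rule finite_subset)
  then show ?thesis using inj finite_imageD by blast
qed

lemma bounded_choice:
  assumes "finite S" "\<forall>x\<in>S. \<exists>r::'b list. Q x r"
  shows "\<exists>B. \<forall>x\<in>S. \<exists>r. Q x r \<and> length r \<le> B"
  using assms
proof (induction S rule: finite_induct)
  case empty
  then show ?case by simp
next
  case (insert a S)
  have "\<forall>x\<in>S. \<exists>r. Q x r" using insert.prems by blast
  then obtain B where B: "\<forall>x\<in>S. \<exists>r. Q x r \<and> length r \<le> B" using insert.IH by blast
  obtain ra where ra: "Q a ra" using insert.prems by blast
  have "\<forall>x\<in>insert a S. \<exists>r. Q x r \<and> length r \<le> max B (length ra)"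
  proof
    fix x assume "x \<in> insert a S"
    then show "\<exists>r. Q x r \<and> length r \<le> max B (length ra)"
    proof
      assume "x = a" then show ?thesis using ra by (intro exI[of _ ra]) simp
    next
      assume "x \<in> S" then obtain r where "Q x r" "length r \<le> B" using B by blast
      then show ?thesis by (intro exI[of _ r]) auto
    qed
  qed
  then show ?case by blast
qed

lemma hd_concat_map:
  assumes "xs \<noteq> []" "\<forall>x. f x \<noteq> []"
  shows "hd (concat (map f xs)) = hd (f (hd xs))"
  using assms by (cases xs) auto

lemma hd_aN:
  assumes m: "2 \<le> m"
  shows "is_perm m \<pi> \<Longrightarrow> \<pi> 1 = m \<Longrightarrow> j \<in> {1..m} \<Longrightarrow>
    hd (path_subst m \<pi> (replicate N La) j) = (if j \<le> N + 1 then 1 else j - N)"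
proof (induction N arbitrary: \<pi>)
  case 0
  then show ?case by auto
next
  case (Suc N)
  have K: "last_pre m \<pi> = 1" using last_pre_eq[OF Suc.prems(1), of 1] Suc.prems m by auto
  let ?\<pi>' = "rauzy_a m \<pi>"
  have p': "is_perm m ?\<pi>'" using rauzy_a_perm[OF Suc.prems(1)] m by auto
  have p1: "?\<pi>' 1 = m" using ra_low[of 1 m \<pi>] K Suc.prems m by auto
  have IH: "hd (path_subst m ?\<pi>' (replicate N La) j) = (if j \<le> N + 1 then 1 else j - N)"
    using Suc.IH[OF p' p1 Suc.prems(3)] .
  have "path_subst m \<pi> (replicate (Suc N) La) j =
      concat (map (step_subst m La \<pi>) (path_subst m ?\<pi>' (replicate N La) j))"
    by (simp add: rauzy_step_def)
  then have "hd (path_subst m \<pi> (replicate (Suc N) La) j) =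
      hd (step_subst m La \<pi> (hd (path_subst m ?\<pi>' (replicate N La) j)))"
    using hd_concat_map[OF path_subst_ne step_subst_ne_all] by simp
  also have "\<dots> = (if j \<le> Suc N + 1 then 1 else j - Suc N)"
    using IH K Suc.prems(3) unfolding step_subst_def Let_def by auto
  finally show ?case .
qed

lemma border_free:
  assumes Y: "Y \<noteq> []" "hd Y = Lb" "last Y = Lb" "length Y \<le> N"
    and q: "q = replicate N La @ Y"
    and i: "1 \<le> i" "i < length q"
  shows "drop i q \<noteq> take (length q - i) q"
proof
  assume D: "drop i q = take (length q - i) q"
  let ?n = "length q" let ?l = "length q - i"
  have n: "?n = N + length Y" using q by simp
  have qa: "p < N \<Longrightarrow> q ! p = La" for p using q by (simp add: nth_append)
  have qN: "q ! N = Lb" using q Y by (simp add: nth_append hd_conv_nth)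
  have "\<not> (N + length Y - 1 < N)" using Y by (cases Y) auto
  then have "q ! (?n - 1) = Y ! (length Y - 1)" using q Y by (simp add: nth_append)
  then have qlast: "q ! (?n - 1) = Lb" using Y by (simp add: last_conv_nth)
  show False
  proof (cases "?l \<le> N")
    case True
    have "drop i q ! (?l - 1) = q ! (?n - 1)" using i by (simp add: nth_drop)
    moreover have "take ?l q ! (?l - 1) = q ! (?l - 1)" using i by simp
    moreover have "q ! (?l - 1) = La" using True i by (intro qa) auto
    ultimately show False using D qlast by simp
  next
    case False
    have iN: "i < N" using False n i Y by auto
    have "drop i q ! (N - i) = q ! N" using iN n Y by (simp add: nth_drop)
    moreover have "take ?l q ! (N - i) = q ! (N - i)" using False by simp
    moreover have "q ! (N - i) = La" using iN i by (intro qa) auto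
    ultimately show False using D qN by simp
  qed
qed



theorem lemma7p1:
  fixes m :: nat and \<pi>0 :: "nat \<Rightarrow> nat"
  assumes "2 \<le> m" and "is_perm m \<pi>0" and "irreducible m \<pi>0"
  shows "\<exists>\<pi>\<in>rauzy_class m \<pi>0. \<exists>q :: rlabel list.
           simple_word (path_edges m \<pi> q)
         \<and> (\<forall>i\<in>{1..m}. \<forall>j\<in>{1..m}. 0 < rauzy_matrix m \<pi> q i j)
         \<and> (\<exists>u :: nat \<Rightarrow> nat list.
               (\<forall>k\<in>{1..m}. good_return_word m (path_subst m \<pi> q) (u k))
             \<and> generates_Zm m (\<lambda>k. pop_vec (u k)))"
proof -
  note m = assms(1) and p0 = assms(2) and i0 = assms(3)
  have m1: "1 \<le> m" using m by simp
  obtain \<pi>s where \<pi>s: "\<pi>s \<in> rauzy_class m \<pi>0" "\<pi>s 1 = m" using exists_std[OF m p0 i0] by blast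
  have ps: "is_perm m \<pi>s" "irreducible m \<pi>s" using class_good[OF \<pi>s(1) p0 i0 m1] by auto
  have fin: "finite (rauzy_class m \<pi>0)"
  proof (rule finite_subset[OF _ finite_perms[of m]])
    show "rauzy_class m \<pi>0 \<subseteq> {\<pi>. is_perm m \<pi>}"
    proof
      fix \<pi> assume "\<pi> \<in> rauzy_class m \<pi>0"
      then show "\<pi> \<in> {\<pi>. is_perm m \<pi>}" using class_good[OF _ p0 i0 m1] by simp
    qed
  qed
  have "\<forall>\<pi>\<in>rauzy_class m \<pi>0. \<exists>r. full m (\<lambda>j. set (path_subst m \<pi> r j))"
    using positive_path[OF m p0 i0] by blast
  then obtain B where B: "\<forall>\<pi>\<in>rauzy_class m \<pi>0. \<exists>r. full m (\<lambda>j. set (path_subst m \<pi> r j)) \<and> length r \<le> B"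
    using bounded_choice[OF fin, where Q = "\<lambda>\<pi> r. full m (\<lambda>j. set (path_subst m \<pi> r j))"] by blast
  define N where "N = 2 * B + 2 + m"
  define \<pi>1 where "\<pi>1 = pend m \<pi>s (replicate N La)"
  have c1: "\<pi>1 \<in> rauzy_class m \<pi>0" unfolding \<pi>1_def using pend_class[OF \<pi>s(1)] .
  define \<pi>2 where "\<pi>2 = rauzy_b m \<pi>1"
  have c2: "\<pi>2 \<in> rauzy_class m \<pi>0" unfolding \<pi>2_def using class_step[OF c1, of Lb] by (simp add: rauzy_step_b)
  obtain P where P: "full m (\<lambda>j. set (path_subst m \<pi>2 P j))" "length P \<le> B" using B c2 by blast
  define \<pi>3 where "\<pi>3 = pend m \<pi>2 P"
  have c3: "\<pi>3 \<in> rauzy_class m \<pi>0" unfolding \<pi>3_def using pend_class[OF c2] .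
  obtain P' where P': "full m (\<lambda>j. set (path_subst m \<pi>3 P' j))" "length P' \<le> B" using B c3 by blast
  define \<pi>4 where "\<pi>4 = pend m \<pi>3 P'"
  define Y where "Y = Lb # P @ P' @ [Lb]"
  define q where "q = replicate N La @ Y"
  define \<zeta>1 where "\<zeta>1 = path_subst m \<pi>s (replicate N La)"
  define \<zeta> where "\<zeta> = path_subst m \<pi>s q"
  have g1: "is_perm m \<pi>1" "irreducible m \<pi>1" using class_good[OF c1 p0 i0 m1] by auto
  have g2: "is_perm m \<pi>2" "irreducible m \<pi>2" using class_good[OF c2 p0 i0 m1] by auto
  have g3: "is_perm m \<pi>3" "irreducible m \<pi>3" using class_good[OF c3 p0 i0 m1] by auto
  have h\<zeta>: "\<zeta> j = concat (map \<zeta>1 (path_subst m \<pi>1 Y j))" for j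
    unfolding \<zeta>_def \<zeta>1_def q_def \<pi>1_def by (rule path_subst_append)
  have hY: "path_subst m \<pi>1 Y j = concat (map (step_subst m Lb \<pi>1) (path_subst m \<pi>2 (P @ (P' @ [Lb])) j))" for j
    unfolding Y_def \<pi>2_def by (simp add: rauzy_step_def)
  have hP: "path_subst m \<pi>2 (P @ (P' @ [Lb])) j = concat (map (path_subst m \<pi>2 P) (path_subst m \<pi>3 (P' @ [Lb]) j))" for j
    unfolding \<pi>3_def by (rule path_subst_append)
  have hW: "path_subst m \<pi>3 (P' @ [Lb]) j = concat (map (path_subst m \<pi>3 P') (step_subst m Lb \<pi>4 j))" for j
    unfolding \<pi>4_def by (rule path_subst_snoc)
  have hd1: "hd (\<zeta>1 c) = 1" if c: "c \<in> {1..m}" for c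
    unfolding \<zeta>1_def using hd_aN[OF m ps(1) \<pi>s(2) c, of N] c unfolding N_def by auto
  have Z: "\<exists>x y. \<zeta> j = x @ \<zeta>1 c @ [hd (\<zeta>1 c)] @ y" if j: "j \<in> {1..m}" and c: "c \<in> {1..m}" for j c
  proof -
    define W where "W = path_subst m \<pi>3 (P' @ [Lb]) j"
    have W1: "{1..m} \<subseteq> set W"
    proof -
      obtain t where "step_subst m Lb \<pi>4 j = j # t" using step_subst_b_hd by blast
      then have "set (path_subst m \<pi>3 P' j) \<subseteq> set W" unfolding W_def hW by auto
      then show ?thesis using P'(1) j unfolding full_def by blast
    qed
    have W2: "set W \<subseteq> {1..m}" unfolding W_def using path_subst_range[OF g3(1) m1 j] .
    have "card {1..m} \<le> card (set W)" using W1 by (intro card_mono) auto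
    then have "2 \<le> length W" using card_length[of W] m by simp
    then have "W \<noteq> []" "tl W \<noteq> []" by (cases W, simp, cases "tl W", auto)+
    then have "W = hd W # hd (tl W) # tl (tl W)" by simp
    then obtain w1 w2 rest where Wc: "W = w1 # w2 # rest" by blast
    have w12: "w1 \<in> {1..m}" "w2 \<in> {1..m}" using W2 Wc by auto
    define V where "V = concat (map (path_subst m \<pi>2 P) W)"
    have V: "\<exists>x y. V = x @ [c] @ y \<and> y \<noteq> []"
    proof -
      have "c \<in> set (path_subst m \<pi>2 P w1)" using P(1) w12 c unfolding full_def by blast
      then obtain x y' where xy: "path_subst m \<pi>2 P w1 = x @ c # y'" by (meson split_list)
      have ne: "path_subst m \<pi>2 P w2 \<noteq> []" by (rule path_subst_ne)
      have "V = x @ [c] @ (y' @ path_subst m \<pi>2 P w2 @ concat (map (path_subst m \<pi>2 P) rest))"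
        unfolding V_def Wc using xy by simp
      then show ?thesis using ne by blast
    qed
    define U where "U = path_subst m \<pi>1 Y j"
    have UV: "U = concat (map (step_subst m Lb \<pi>1) V)" unfolding U_def V_def W_def hY hP ..
    have U: "\<exists>x y. U = x @ [c] @ y \<and> y \<noteq> []"
    proof -
      obtain x y where xy: "V = x @ [c] @ y" "y \<noteq> []" using V by blast
      obtain t where t: "step_subst m Lb \<pi>1 c = c # t" using step_subst_b_hd by blast
      have ne: "concat (map (step_subst m Lb \<pi>1) y) \<noteq> []"
        using xy(2) step_subst_ne[of m Lb \<pi>1 "hd y"] by (cases y) auto
      have "U = concat (map (step_subst m Lb \<pi>1) x) @ [c] @ (t @ concat (map (step_subst m Lb \<pi>1) y))"
        unfolding UV xy(1) using t by simp
      then show ?thesis using ne by blast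
    qed
    have Ur: "set U \<subseteq> {1..m}" unfolding U_def using path_subst_range[OF g1(1) m1 j] .
    obtain x y where xy: "U = x @ [c] @ y" "y \<noteq> []" using U by blast
    have hy: "hd y \<in> {1..m}" using xy Ur by (cases y) auto
    have ne: "\<forall>l. \<zeta>1 l \<noteq> []" unfolding \<zeta>1_def using path_subst_ne by blast
    have "hd (concat (map \<zeta>1 y)) = hd (\<zeta>1 (hd y))" using hd_concat_map[OF xy(2) ne] .
    also have "\<dots> = 1" using hd1[OF hy] .
    finally have "hd (concat (map \<zeta>1 y)) = hd (\<zeta>1 c)" using hd1[OF c] by simp
    moreover have "concat (map \<zeta>1 y) \<noteq> []" using xy(2) ne by (cases y) auto
    ultimately have "concat (map \<zeta>1 y) = hd (\<zeta>1 c) # tl (concat (map \<zeta>1 y))"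
      by (metis list.exhaust_sel)
    then obtain rest where rest: "concat (map \<zeta>1 y) = hd (\<zeta>1 c) # rest" by blast
    have "\<zeta> j = concat (map \<zeta>1 x) @ \<zeta>1 c @ [hd (\<zeta>1 c)] @ rest"
      using h\<zeta>[of j] xy(1) rest unfolding U_def by simp
    then show ?thesis by blast
  qed
  have gz: "genZ m \<zeta>1" unfolding \<zeta>1_def using genZ_path[OF m ps] .
  have simple: "simple_word (path_edges m \<pi>s q)"
    unfolding simple_word_def
  proof (intro allI impI notI)
    fix i assume i: "1 \<le> i \<and> i < length (path_edges m \<pi>s q)"
      and D: "drop i (path_edges m \<pi>s q) = take (length (path_edges m \<pi>s q) - i) (path_edges m \<pi>s q)"
    have "length (map snd (path_edges m \<pi>s q)) = length q" by (simp only: labels_path_edges)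
    then have len: "length (path_edges m \<pi>s q) = length q" by simp
    have "map snd (drop i (path_edges m \<pi>s q)) = map snd (take (length q - i) (path_edges m \<pi>s q))"
      using D len by simp
    then have "drop i q = take (length q - i) q" by (simp add: drop_map[symmetric] take_map[symmetric] labels_path_edges)
    moreover have "Y \<noteq> []" "hd Y = Lb" "last Y = Lb" "length Y \<le> N" unfolding Y_def N_def using P(2) P'(2) by auto
    ultimately show False using border_free[OF _ _ _ _ q_def, of i] i len by auto
  qed
  have pos: "\<forall>i\<in>{1..m}. \<forall>j\<in>{1..m}. 0 < rauzy_matrix m \<pi>s q i j"
  proof (intro ballI)
    fix i j assume i: "i \<in> {1..m}" and j: "j \<in> {1..m}"
    obtain c where c: "c \<in> {1..m}" "j \<in> set (\<zeta>1 c)" using genZ_cover[OF gz j] by blast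
    obtain x y where "\<zeta> i = x @ \<zeta>1 c @ [hd (\<zeta>1 c)] @ y" using Z[OF i c(1)] by blast
    then have "j \<in> set (\<zeta> i)" using c by auto
    then have "count_list (\<zeta> i) j \<noteq> 0" by (simp add: count_list_0_iff)
    then show "0 < rauzy_matrix m \<pi>s q i j"
      unfolding rauzy_matrix_def subst_matrix_def \<zeta>_def by simp
  qed
  have grw: "\<forall>k\<in>{1..m}. good_return_word m (path_subst m \<pi>s q) (\<zeta>1 k)"
  proof
    fix k assume k: "k \<in> {1..m}"
    have "\<zeta>1 k \<noteq> []" unfolding \<zeta>1_def by (rule path_subst_ne)
    moreover have "\<forall>j\<in>{1..m}. \<exists>x y. path_subst m \<pi>s q j = x @ \<zeta>1 k @ [hd (\<zeta>1 k)] @ y"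
      using Z k unfolding \<zeta>_def by blast
    ultimately show "good_return_word m (path_subst m \<pi>s q) (\<zeta>1 k)"
      unfolding good_return_word_def by blast
  qed
  have gen: "generates_Zm m (\<lambda>k. pop_vec (\<zeta>1 k))" using gz genZ_gen by blast
  have ex: "\<exists>u :: nat \<Rightarrow> nat list.
               (\<forall>k\<in>{1..m}. good_return_word m (path_subst m \<pi>s q) (u k))
             \<and> generates_Zm m (\<lambda>k. pop_vec (u k))"
    by (rule exI[of _ \<zeta>1]) (use grw gen in blast)
  show ?thesis
    by (rule bexI[OF _ \<pi>s(1)], rule exI[of _ q]) (use simple pos ex in blast)
qed


end
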